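(* Let $q$ be a prime power, $s\geq1$, $n=q^{s-1}$, and let $\mathcal{RM}_q(1,s-1)$ be the first order $q$-ary Reed-Muller code. Then for every $0<r<s$, \[ W^{(r)}_{\mathcal{RM}_q(1,s-1)}(X,Y)=\begin{bmatrix} s-1\\ r-1\end{bmatrix}_q Y^n+q^r\begin{bmatrix} s-1\\ r\end{bmatrix}_q X^{q^{s-1-r}}\,Y^{q^{s-1}-q^{s-1-r}}, \] and moreover $W^{(0)}_{\mathcal{RM}_q(1,s-1)}(X,Y)=X^n$ and $W^{(s)}_{\mathcal{RM}_q(1,s-1)}(X,Y)=Y^n$.
   Context: The first order $q$-ary Reed-Muller code $\mathcal{RM}_q(1,s-1)$ is the linear $[q^{s-1},s]$ code over $\mathbb{F}_q$ generated by the $s\times q^{s-1}$ matrix whose first row is the all-one row and whose columns, restricted to the remaining $s-1$ rows, run through all vectors of $\mathbb{F}_q^{s-1}$ (each exactly once). For a linear code $C\subseteq\mathbb{F}_q^n$ and a subcode $D$, the support of $D$ is the set of coordinates where some word of $D$ is nonzero, and $\mathrm{wt}(D)$ is its size. The $r$-th generalized weight enumerator is $W^{(r)}_C(X,Y)=\sum_{w=0}^n A^{(r)}_wX^{n-w}Y^w$ where $A^{(r)}_w$ is the number of $r$-dimensional subspaces $D\subseteq C$ with $\mathrm{wt}(D)=w$. $\begin{bmatrix} a\\ b\end{bmatrix}_q$ denotes the Gaussian binomial coefficient. *)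

theory Defs
  imports Complex_Main "HOL-Library.Function_Algebras" "HOL-Library.Cardinality"
begin

text \<open>Finite field F_q is a type 'a :: {finite, field}; q = CARD('a).
Coordinates of RM_q(1,s-1) are the points of F_q^(s-1), represented as functions
nat => 'a vanishing from index s-1 on. Words are functions from points to 'a,
vanishing off the point set; vector operations are pointwise.\<close>

definition rm_points :: "'a::{finite,field} itself \<Rightarrow> nat \<Rightarrow> (nat \<Rightarrow> 'a) set" where
  "rm_points T s = {x. \<forall>i\<ge>s - 1. x i = 0}"

definition word_scale :: "'a::field \<Rightarrow> ('k \<Rightarrow> 'a) \<Rightarrow> ('k \<Rightarrow> 'a)" where
  "word_scale c f = (\<lambda>x. c * f x)"

text \<open>Codeword of message a = (a_0, a_1, ..., a_{s-1}): generator matrix with all-one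
first row, columns indexed by the points of F_q^(s-1).\<close>
definition rm_word :: "'a::{finite,field} itself \<Rightarrow> nat \<Rightarrow> (nat \<Rightarrow> 'a) \<Rightarrow> ((nat \<Rightarrow> 'a) \<Rightarrow> 'a)" where
  "rm_word T s a = (\<lambda>x. if x \<in> rm_points T s then a 0 + (\<Sum>i<s - 1. a (Suc i) * x i) else 0)"

definition RM :: "'a::{finite,field} itself \<Rightarrow> nat \<Rightarrow> ((nat \<Rightarrow> 'a) \<Rightarrow> 'a) set" where
  "RM T s = range (rm_word T s)"

definition supp :: "(('k \<Rightarrow> 'a::zero)) set \<Rightarrow> 'k set" where
  "supp D = {x. \<exists>c\<in>D. c x \<noteq> 0}"

definition wt :: "(('k \<Rightarrow> 'a::zero)) set \<Rightarrow> nat" where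
  "wt D = card (supp D)"

definition gen_A :: "'a::{finite,field} itself \<Rightarrow> nat \<Rightarrow> nat \<Rightarrow> nat \<Rightarrow> nat" where
  "gen_A T s r w = card {D. module.subspace (word_scale :: 'a \<Rightarrow> _) D \<and> D \<subseteq> RM T s
       \<and> vector_space.dim (word_scale :: 'a \<Rightarrow> _) D = r \<and> wt D = w}"

text \<open>The r-th generalized weight enumerator, evaluated in an arbitrary commutative ring
(universally quantified over X, Y, this is the polynomial identity).\<close>
definition gen_W :: "'a::{finite,field} itself \<Rightarrow> nat \<Rightarrow> nat \<Rightarrow> 'b::comm_ring_1 \<Rightarrow> 'b \<Rightarrow> 'b" where
  "gen_W T s r X Y = (let n = card (rm_points T s) in
     (\<Sum>w = 0..n. of_nat (gen_A T s r w) * X ^ (n - w) * Y ^ w))"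

definition gauss_binom :: "nat \<Rightarrow> nat \<Rightarrow> nat \<Rightarrow> nat" where
  "gauss_binom q a b = (if b \<le> a then (\<Prod>i<b. q ^ a - q ^ i) div (\<Prod>i<b. q ^ b - q ^ i) else 0)"

end

theory Submission
  imports Defs
begin


definition indl_gen :: "('a::field \<Rightarrow> 'b::ab_group_add \<Rightarrow> 'b) \<Rightarrow> 'b set \<Rightarrow> 'b set \<Rightarrow> nat \<Rightarrow> 'b list set" where
  "indl_gen sc B W m = {us. length us = m \<and> set us \<subseteq> W \<and> card (module.span sc (B \<union> set us)) = card B * CARD('a) ^ m}"

context vector_space
begin

abbreviation "indl \<equiv> indl_gen scale"


lemma card_span_insert:
  assumes fin: "finite (UNIV::'a set)" and a: "a \<notin> span S"
  shows "card (span (insert a S)) = CARD('a) * card (span S)"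
proof -
  define g where "g = (\<lambda>(k, y). k *s a + y)"
  have img: "span (insert a S) = g ` ((UNIV::'a set) \<times> span S)"
  proof
    show "span (insert a S) \<subseteq> g ` ((UNIV::'a set) \<times> span S)"
    proof
      fix x assume "x \<in> span (insert a S)"
      then obtain k where "x - k *s a \<in> span S" using span_breakdown_eq by blast
      then show "x \<in> g ` ((UNIV::'a set) \<times> span S)"
        by (intro image_eqI[of _ _ "(k, x - k *s a)"]) (auto simp: g_def)
    qed
    show "g ` ((UNIV::'a set) \<times> span S) \<subseteq> span (insert a S)"
      by (clarsimp simp: g_def span_breakdown_eq) (metis add_diff_cancel_left')
  qed
  have inj: "inj_on g ((UNIV::'a set) \<times> span S)"
  proof (rule inj_onI, clarify)
    fix k y k' y' assume y: "y \<in> span S" and y': "y' \<in> span S" and eq: "g (k, y) = g (k', y')"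
    have e: "(k - k') *s a = y' - y" using eq by (simp add: g_def algebra_simps)
    show "k = k' \<and> y = y'"
    proof (cases "k = k'")
      case True then show ?thesis using eq by (simp add: g_def)
    next
      case False
      have "inverse (k - k') *s ((k - k') *s a) \<in> span S"
        unfolding e by (intro span_scale span_diff y y')
      then have "a \<in> span S" using False by simp
      then show ?thesis using a by simp
    qed
  qed
  have "card (span (insert a S)) = card ((UNIV::'a set) \<times> span S)"
    unfolding img using inj by (simp add: card_image)
  also have "\<dots> = CARD('a) * card (span S)" by (simp add: card_cartesian_product)
  finally show ?thesis .
qed

lemma card_span_insert_le:
  assumes fin: "finite (UNIV::'a set)" and "finite (span S)"
  shows "card (span (insert a S)) \<le> CARD('a) * card (span S)"
proof (cases "a \<in> span S")
  case True
  have "CARD('a) \<ge> 1" using fin by (simp add: Suc_le_eq card_gt_0_iff)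
  then show ?thesis using True by (simp add: span_redundant)
next
  case False then show ?thesis using card_span_insert[OF fin] by simp
qed

lemma card_span_independent:
  assumes fin: "finite (UNIV::'a set)" and "finite B" "independent B" "finite (span B)"
  shows "card (span B) = CARD('a) ^ card B"
  using assms(2-4)
proof (induction B rule: finite_induct)
  case empty then show ?case by simp
next
  case (insert x F)
  have i: "independent F" "x \<notin> span F" using insert.prems(1) insert.hyps(2)
    by (auto simp: independent_insert)
  have "finite (span F)" using insert.prems(2) span_mono[of F "insert x F"] finite_subset by blast
  then show ?case using insert card_span_insert[OF fin i(2)] i by simp
qed

lemma card_subspace_dim:
  assumes fin: "finite (UNIV::'a set)" and D: "subspace D" "finite D"
  shows "card D = CARD('a) ^ dim D"
proof -
  obtain B where B: "B \<subseteq> D" "independent B" "D \<subseteq> span B" "card B = dim D"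
    using basis_exists by blast
  have sp: "span B = D" using span_subspace[OF B(1) B(3) D(1)] .
  have "finite B" using B(1) D(2) finite_subset by blast
  then show ?thesis using card_span_independent[OF fin _ B(2)] sp B(4) D(2) by simp
qed

lemma indl_def: "indl_gen scale B W m = {us. length us = m \<and> set us \<subseteq> W \<and> card (span (B \<union> set us)) = card B * CARD('a) ^ m}"
  by (simp add: indl_gen_def)

lemma span_B_cons: "span (B \<union> set (u # us)) = span (insert u (B \<union> set us))"
  by simp

lemma card_span_bound:
  assumes fin: "finite (UNIV::'a set)" and V: "subspace V" "finite V" and B: "subspace B" "B \<subseteq> V"
    and us: "set us \<subseteq> V"
  shows "card (span (B \<union> set us)) \<le> card B * CARD('a) ^ length us"
  using us
proof (induction us)
  case Nil
  have "local.span B = B" using B(1) by simp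
  then show ?case by (simp del: span_eq_iff)
next
  case (Cons u us)
  have "finite (span (B \<union> set us))"
    using Cons.prems B V span_minimal[of "B \<union> set us" V] finite_subset by auto
  then have "card (span (B \<union> set (u # us))) \<le> CARD('a) * card (span (B \<union> set us))"
    using card_span_insert_le[OF fin] by simp
  also have "\<dots> \<le> CARD('a) * (card B * CARD('a) ^ length us)"
    using Cons by simp
  finally show ?case by (simp add: ac_simps)
qed

lemma card_ge2: assumes fin: "finite (UNIV::'a set)" shows "CARD('a) \<ge> 2"
proof -
  have "card {0::'a, 1} \<le> CARD('a)" using fin by (intro card_mono) auto
  then show ?thesis by simp
qed

lemma indl_Suc:
  assumes fin: "finite (UNIV::'a set)" and V: "subspace V" "finite V" and B: "subspace B" "B \<subseteq> V"
  shows "indl_gen scale B V (Suc m) = (\<lambda>(us, u). u # us) ` (SIGMA us:indl_gen scale B V m. V - span (B \<union> set us))"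
proof (intro set_eqI iffI)
  fix xs assume xs: "xs \<in> indl_gen scale B V (Suc m)"
  then obtain u us where xs_eq: "xs = u # us" unfolding indl_def by (cases xs) auto
  have l: "length us = m" "set us \<subseteq> V" "u \<in> V" using xs xs_eq by (auto simp: indl_def)
  have c: "card (span (insert u (B \<union> set us))) = card B * CARD('a) ^ Suc m"
    using xs xs_eq by (simp add: indl_def)
  have fs: "finite (span (B \<union> set us))"
    using l B V span_minimal[of "B \<union> set us" V] finite_subset by auto
  have bd: "card (span (B \<union> set us)) \<le> card B * CARD('a) ^ m"
    using card_span_bound[OF fin V B l(2)] l(1) by simp
  have q2: "CARD('a) \<ge> 2" by (rule card_ge2[OF fin])
  have cB: "card B \<ge> 1"
    using B V finite_subset[of B V] subspace_0[of B] by (auto simp: Suc_le_eq card_gt_0_iff)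
  have nin: "u \<notin> span (B \<union> set us)"
  proof
    assume "u \<in> span (B \<union> set us)"
    then have "card B * CARD('a) ^ Suc m \<le> card B * CARD('a) ^ m"
      using c bd by (simp add: span_redundant)
    moreover have "card B * CARD('a) ^ m < card B * CARD('a) ^ Suc m"
      using q2 cB by simp
    ultimately show False by simp
  qed
  have "card (span (B \<union> set us)) = card B * CARD('a) ^ m"
    using c card_span_insert[OF fin nin] q2 by simp
  then have "us \<in> indl_gen scale B V m" using l by (simp add: indl_def)
  then show "xs \<in> (\<lambda>(us, u). u # us) ` (SIGMA us:indl_gen scale B V m. V - span (B \<union> set us))"
    using xs_eq nin l by force
next
  fix xs assume "xs \<in> (\<lambda>(us, u). u # us) ` (SIGMA us:indl_gen scale B V m. V - span (B \<union> set us))"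
  then obtain us u where us: "us \<in> indl_gen scale B V m" and u: "u \<in> V" "u \<notin> span (B \<union> set us)"
    and xs: "xs = u # us" by auto
  have "card (span (insert u (B \<union> set us))) = CARD('a) * card (span (B \<union> set us))"
    using card_span_insert[OF fin u(2)] .
  then show "xs \<in> indl_gen scale B V (Suc m)" using us u xs by (simp add: indl_def)
qed

lemma finite_indl: assumes "finite V" shows "finite (indl_gen scale B V m)"
proof -
  have "indl_gen scale B V m \<subseteq> {xs. set xs \<subseteq> V \<and> length xs = m}" by (auto simp: indl_def)
  then show ?thesis using finite_lists_length_eq[OF assms] finite_subset by blast
qed

lemma card_indl:
  assumes fin: "finite (UNIV::'a set)" and V: "subspace V" "finite V" and B: "subspace B" "B \<subseteq> V"
  shows "card (indl_gen scale B V m) = (\<Prod>i<m. card V - card B * CARD('a) ^ i)"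
proof (induction m)
  case 0
  have "local.span B = B" using B(1) by simp
  then have "indl_gen scale B V 0 = {[]}" by (auto simp del: span_eq_iff simp: indl_def)
  then show ?case by simp
next
  case (Suc m)
  have inj: "inj_on (\<lambda>(us, u). u # us) (SIGMA us:indl_gen scale B V m. V - span (B \<union> set us))"
    by (auto simp: inj_on_def)
  have "card (indl_gen scale B V (Suc m)) = card (SIGMA us:indl_gen scale B V m. V - span (B \<union> set us))"
    unfolding indl_Suc[OF fin V B] using inj by (simp add: card_image)
  also have "\<dots> = (\<Sum>us\<in>indl_gen scale B V m. card (V - span (B \<union> set us)))"
    using finite_indl[OF V(2)] V(2) by (simp add: card_SigmaI)
  also have "\<dots> = (\<Sum>us\<in>indl_gen scale B V m. card V - card B * CARD('a) ^ m)"
  proof (rule sum.cong[OF refl])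
    fix us assume us: "us \<in> indl_gen scale B V m"
    have sub: "span (B \<union> set us) \<subseteq> V" using us B V span_minimal[of "B \<union> set us" V]
      by (auto simp: indl_def)
    then have "card (V - span (B \<union> set us)) = card V - card (span (B \<union> set us))"
      using V(2) finite_subset[OF sub V(2)] by (simp add: card_Diff_subset)
    then show "card (V - span (B \<union> set us)) = card V - card B * CARD('a) ^ m"
      using us by (simp add: indl_def)
  qed
  also have "\<dots> = card (indl_gen scale B V m) * (card V - card B * CARD('a) ^ m)" by simp
  finally show ?case using Suc by simp
qed

lemma count_sub_containing:
  assumes fin: "finite (UNIV::'a set)" and V: "subspace V" "finite V" and B: "subspace B" "B \<subseteq> V"
  shows "card {D. subspace D \<and> B \<subseteq> D \<and> D \<subseteq> V \<and> card D = card B * CARD('a) ^ m}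
          * (\<Prod>i<m. card B * CARD('a) ^ m - card B * CARD('a) ^ i)
         = (\<Prod>i<m. card V - card B * CARD('a) ^ i)"
proof -
  define Sub where "Sub = {D. subspace D \<and> B \<subseteq> D \<and> D \<subseteq> V \<and> card D = card B * CARD('a) ^ m}"
  have finSub: "finite Sub" unfolding Sub_def
    by (rule finite_subset[of _ "Pow V"]) (use V in auto)
  have eq: "indl_gen scale B V m = (\<Union>D\<in>Sub. indl_gen scale B D m)"
  proof (intro set_eqI iffI)
    fix us assume us: "us \<in> indl_gen scale B V m"
    let ?D = "span (B \<union> set us)"
    have "?D \<subseteq> V" using us B V span_minimal[of "B \<union> set us" V] by (auto simp: indl_def)
    moreover have "B \<subseteq> ?D" using span_superset by blast
    ultimately have "?D \<in> Sub" using us by (auto simp: Sub_def indl_def)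
    moreover have "us \<in> indl_gen scale B ?D m" using us span_superset[of "B \<union> set us"] by (auto simp: indl_def)
    ultimately show "us \<in> (\<Union>D\<in>Sub. indl_gen scale B D m)" by blast
  next
    fix us assume "us \<in> (\<Union>D\<in>Sub. indl_gen scale B D m)"
    then show "us \<in> indl_gen scale B V m" by (auto simp: Sub_def indl_def)
  qed
  have disj: "indl_gen scale B D1 m \<inter> indl_gen scale B D2 m = {}"
    if "D1 \<in> Sub" "D2 \<in> Sub" "D1 \<noteq> D2" for D1 D2
  proof -
    have "span (B \<union> set us) = D" if "D \<in> Sub" "us \<in> indl_gen scale B D m" for D us
    proof -
      have sub: "span (B \<union> set us) \<subseteq> D"
        using that span_minimal[of "B \<union> set us" D] by (auto simp: Sub_def indl_def)
      have "finite D" using that V finite_subset by (auto simp: Sub_def)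
      then show ?thesis using card_subset_eq[OF _ sub] that by (auto simp: Sub_def indl_def)
    qed
    then show ?thesis using that by blast
  qed
  have "card (indl_gen scale B V m) = (\<Sum>D\<in>Sub. card (indl_gen scale B D m))"
    unfolding eq
    by (rule card_UN_disjoint[OF finSub]) (use disj V in \<open>auto simp: Sub_def intro!: finite_indl intro: finite_subset\<close>)
  also have "\<dots> = (\<Sum>D\<in>Sub. (\<Prod>i<m. card B * CARD('a) ^ m - card B * CARD('a) ^ i))"
  proof (rule sum.cong[OF refl])
    fix D assume D: "D \<in> Sub"
    have "finite D" using D V finite_subset by (auto simp: Sub_def)
    then show "card (indl_gen scale B D m) = (\<Prod>i<m. card B * CARD('a) ^ m - card B * CARD('a) ^ i)"
      using card_indl[OF fin, of D B m] D B by (auto simp: Sub_def)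
  qed
  finally show ?thesis using card_indl[OF fin V B, of m] by (simp add: Sub_def)
qed

lemma count_sub_avoiding:
  assumes fin: "finite (UNIV::'a set)" and V: "subspace V" "finite V" and u0: "u0 \<in> V" "u0 \<noteq> 0"
  shows "card {D. subspace D \<and> D \<subseteq> V \<and> card D = CARD('a) ^ m \<and> u0 \<notin> D}
          * (\<Prod>i<m. CARD('a) ^ m - CARD('a) ^ i)
         = (\<Prod>i<m. card V - CARD('a) * CARD('a) ^ i)"
proof -
  define B0 where "B0 = span {u0}"
  have cB0: "card B0 = CARD('a)"
    using card_span_insert[OF fin, of u0 "{}"] u0 by (simp add: B0_def)
  have B0: "subspace B0" "B0 \<subseteq> V" using u0 V span_minimal[of "{u0}" V] by (auto simp: B0_def)
  define Sub where "Sub = {D. subspace D \<and> D \<subseteq> V \<and> card D = CARD('a) ^ m \<and> u0 \<notin> D}"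
  have finSub: "finite Sub" unfolding Sub_def
    by (rule finite_subset[of _ "Pow V"]) (use V in auto)
  have spB0: "span (B0 \<union> S) = span (insert u0 S)" for S
    unfolding B0_def span_eq
    by (auto intro: span_superset[THEN subsetD] span_mono[THEN subsetD, rotated])
  have sp0: "span ({0} \<union> S) = span S" for S by simp
  have eq: "indl_gen scale B0 V m = (\<Union>D\<in>Sub. indl_gen scale {0} D m)"
  proof (intro set_eqI iffI)
    fix us assume us: "us \<in> indl_gen scale B0 V m"
    let ?D = "span (set us)"
    have l: "length us = m" "set us \<subseteq> V" using us by (auto simp: indl_def)
    have c: "card (span (insert u0 (set us))) = CARD('a) * CARD('a) ^ m"
      using us cB0 spB0 by (auto simp: indl_def)
    have DV: "?D \<subseteq> V" using l V span_minimal[of "set us" V] by auto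
    have bd: "card ?D \<le> CARD('a) ^ m"
      using card_span_bound[OF fin V, of "{0}" us] l V by (simp add: subspace_0)
    have q2: "CARD('a) \<ge> 2" by (rule card_ge2[OF fin])
    have nin: "u0 \<notin> ?D"
    proof
      assume "u0 \<in> ?D"
      then have "CARD('a) * CARD('a) ^ m \<le> CARD('a) ^ m" using c bd by (simp add: span_redundant)
      moreover have "CARD('a) ^ m < CARD('a) * CARD('a) ^ m" using q2 by simp
      ultimately show False by simp
    qed
    have cD: "card ?D = CARD('a) ^ m" using c card_span_insert[OF fin nin] q2 by simp
    have "?D \<in> Sub" using DV nin cD by (auto simp: Sub_def)
    moreover have "us \<in> indl_gen scale {0} ?D m" using l cD span_superset by (auto simp: indl_def)
    ultimately show "us \<in> (\<Union>D\<in>Sub. indl_gen scale {0} D m)" by blast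
  next
    fix us assume "us \<in> (\<Union>D\<in>Sub. indl_gen scale {0} D m)"
    then obtain D where D: "D \<in> Sub" and us: "us \<in> indl_gen scale {0} D m" by blast
    have sub: "span (set us) \<subseteq> D"
      using D us span_minimal[of "set us" D] by (auto simp: Sub_def indl_def)
    have "finite D" using D V finite_subset by (auto simp: Sub_def)
    then have spD: "span (set us) = D" using card_subset_eq[OF _ sub] D us by (auto simp: Sub_def indl_def)
    have "u0 \<notin> span (set us)" using D spD by (auto simp: Sub_def)
    then have "card (span (insert u0 (set us))) = CARD('a) * CARD('a) ^ m"
      using card_span_insert[OF fin] spD D by (simp add: Sub_def)
    then show "us \<in> indl_gen scale B0 V m" using us D spB0 cB0 by (auto simp: indl_def Sub_def)
  qed
  have disj: "indl_gen scale {0} D1 m \<inter> indl_gen scale {0} D2 m = {}"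
    if "D1 \<in> Sub" "D2 \<in> Sub" "D1 \<noteq> D2" for D1 D2
  proof -
    have "span (set us) = D" if "D \<in> Sub" "us \<in> indl_gen scale {0} D m" for D us
    proof -
      have sub: "span (set us) \<subseteq> D"
        using that span_minimal[of "set us" D] by (auto simp: Sub_def indl_def)
      have "finite D" using that V finite_subset by (auto simp: Sub_def)
      then show ?thesis using card_subset_eq[OF _ sub] that by (auto simp: Sub_def indl_def)
    qed
    then show ?thesis using that by blast
  qed
  have "card (indl_gen scale B0 V m) = (\<Sum>D\<in>Sub. card (indl_gen scale {0} D m))"
    unfolding eq
    by (rule card_UN_disjoint[OF finSub]) (use disj V in \<open>auto simp: Sub_def intro!: finite_indl intro: finite_subset\<close>)
  also have "\<dots> = (\<Sum>D\<in>Sub. (\<Prod>i<m. CARD('a) ^ m - CARD('a) ^ i))"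
  proof (rule sum.cong[OF refl])
    fix D assume D: "D \<in> Sub"
    have "finite D" using D V finite_subset by (auto simp: Sub_def)
    then show "card (indl_gen scale {0} D m) = (\<Prod>i<m. CARD('a) ^ m - CARD('a) ^ i)"
      using card_indl[OF fin, of D "{0}" m] D by (auto simp: Sub_def subspace_0)
  qed
  finally show ?thesis using card_indl[OF fin V B0, of m] cB0 by (simp add: Sub_def)
qed

end


interpretation ws: vector_space "word_scale :: 'a::field \<Rightarrow> ('k \<Rightarrow> 'a) \<Rightarrow> ('k \<Rightarrow> 'a)"
  by unfold_locales (simp_all add: word_scale_def fun_eq_iff algebra_simps)

lemma word_scale_apply[simp]: "word_scale c f x = c * f x"
  by (simp add: word_scale_def)

lemma card_vanish:
  "card {x :: nat \<Rightarrow> 'a::{finite,zero}. \<forall>i\<ge>k. x i = 0} = CARD('a) ^ k"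
proof (induction k)
  case 0
  have "{x :: nat \<Rightarrow> 'a. \<forall>i\<ge>0. x i = 0} = {\<lambda>_. 0}" by auto
  then show ?case by simp
next
  case (Suc k)
  let ?A = "{x :: nat \<Rightarrow> 'a. \<forall>i\<ge>Suc k. x i = 0}"
  let ?B = "{x :: nat \<Rightarrow> 'a. \<forall>i\<ge>k. x i = 0}"
  have "bij_betw (\<lambda>x. (x k, x(k := 0))) ?A (UNIV \<times> ?B)"
  proof (rule bij_betw_byWitness[where f' = "\<lambda>(c, y). y(k := c)"])
    show "\<forall>a\<in>?A. (case (a k, a(k := 0)) of (c, y) \<Rightarrow> y(k := c)) = a" by auto
    show "\<forall>a'\<in>UNIV \<times> ?B. (\<lambda>x. (x k, x(k := 0))) (case a' of (c, y) \<Rightarrow> y(k := c)) = a'"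
      by auto
    show "(\<lambda>x. (x k, x(k := 0))) ` ?A \<subseteq> UNIV \<times> ?B" by auto
    show "(\<lambda>(c, y). y(k := c)) ` (UNIV \<times> ?B) \<subseteq> ?A" by auto
  qed
  then have "card ?A = card ((UNIV::'a set) \<times> ?B)" by (rule bij_betw_same_card)
  then show ?case using Suc by (simp add: card_cartesian_product)
qed

lemma finite_vanish: "finite {x :: nat \<Rightarrow> 'a::{finite,zero}. \<forall>i\<ge>k. x i = 0}"
proof -
  have "CARD('a) > 0" by simp
  then have "card {x :: nat \<Rightarrow> 'a. \<forall>i\<ge>k. x i = 0} > 0" by (simp add: card_vanish)
  then show ?thesis using card_gt_0_iff by blast
qed

lemma card_pts: "card (rm_points (T::'a::{finite,field} itself) s) = CARD('a) ^ (s - 1)"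
  unfolding rm_points_def by (rule card_vanish)

lemma finite_pts: "finite (rm_points (T::'a::{finite,field} itself) s)"
  unfolding rm_points_def by (rule finite_vanish)

lemma rm_word_add: "rm_word T s (a + b) = rm_word T s a + rm_word T s b"
  by (auto simp: rm_word_def fun_eq_iff sum.distrib algebra_simps)

lemma rm_word_scale: "rm_word T s (\<lambda>i. c * a i) = word_scale c (rm_word T s a)"
  by (auto simp: rm_word_def fun_eq_iff sum_distrib_left algebra_simps)

lemma rm_word_zero: "rm_word T s 0 = 0"
  by (auto simp: rm_word_def fun_eq_iff)

lemma RM_subspace: "ws.subspace (RM T s)"
  unfolding ws.subspace_def RM_def
proof (intro conjI ballI allI)
  have "rm_word T s 0 \<in> range (rm_word T s)" by (rule rangeI)
  then show "0 \<in> range (rm_word T s)" by (simp add: rm_word_zero)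
  fix x y assume "x \<in> range (rm_word T s)" "y \<in> range (rm_word T s)"
  then show "x + y \<in> range (rm_word T s)" by (auto simp flip: rm_word_add)
next
  fix c x assume "x \<in> range (rm_word T s)"
  then show "word_scale c x \<in> range (rm_word T s)" by (auto simp flip: rm_word_scale)
qed

definition ej :: "nat \<Rightarrow> nat \<Rightarrow> 'a::field" where "ej j = (\<lambda>t. if t = j then 1 else 0)"

lemma rm_word_at0: "rm_word T s a (\<lambda>_. 0) = a 0"
  by (simp add: rm_word_def rm_points_def)

lemma rm_word_ej: "j < s - 1 \<Longrightarrow> rm_word (T::'a::{finite,field} itself) s a (ej j) = a 0 + a (Suc j)"
  by (simp add: rm_word_def rm_points_def ej_def if_distrib[of "\<lambda>x. _ * x"] cong: if_cong)

lemma card_RM: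
  assumes s: "s \<ge> 1"
  shows "card (RM (T::'a::{finite,field} itself) s) = CARD('a) ^ s"
proof -
  define M where "M = {a :: nat \<Rightarrow> 'a. \<forall>i\<ge>s. a i = 0}"
  have "RM T s = rm_word T s ` M"
  proof
    show "rm_word T s ` M \<subseteq> RM T s" by (auto simp: RM_def)
    show "RM T s \<subseteq> rm_word T s ` M"
    proof
      fix w assume "w \<in> RM T s"
      then obtain a where w: "w = rm_word T s a" by (auto simp: RM_def)
      have "w = rm_word T s (\<lambda>i. if i < s then a i else 0)"
        unfolding w using s by (auto simp: rm_word_def fun_eq_iff intro!: sum.cong)
      then show "w \<in> rm_word T s ` M" by (auto simp: M_def)
    qed
  qed
  moreover have "inj_on (rm_word T s) M"
  proof (rule inj_onI)
    fix a b assume a: "a \<in> M" and b: "b \<in> M" and eq: "rm_word T s a = rm_word T s b"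
    have h0: "a 0 = b 0" using eq rm_word_at0[of T s] by metis
    show "a = b"
    proof
      fix i show "a i = b i"
      proof (cases "i < s")
        case True
        show ?thesis
        proof (cases i)
          case 0 then show ?thesis using h0 by simp
        next
          case (Suc j)
          then have "j < s - 1" using True by simp
          then have "a 0 + a (Suc j) = b 0 + b (Suc j)" using eq rm_word_ej[of j s T] by metis
          then show ?thesis using h0 Suc by simp
        qed
      next
        case False then show ?thesis using a b by (auto simp: M_def)
      qed
    qed
  qed
  ultimately have "card (RM T s) = card M" by (simp add: card_image)
  then show ?thesis by (simp add: M_def card_vanish)
qed

definition one1 :: "'a::{finite,field} itself \<Rightarrow> nat \<Rightarrow> ((nat \<Rightarrow> 'a) \<Rightarrow> 'a)" where
  "one1 T s = rm_word T s (\<lambda>i. if i = 0 then 1 else 0)"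

lemma one1_apply: "one1 T s x = (if x \<in> rm_points T s then 1 else 0)"
  by (simp add: one1_def rm_word_def)

lemma one1_RM: "one1 T s \<in> RM T s" by (simp add: one1_def RM_def)

lemma zero_pts: "(\<lambda>_. 0) \<in> rm_points T s" by (simp add: rm_points_def)

lemma one1_nz: "one1 T s \<noteq> 0"
proof
  assume "one1 T s = 0"
  then have "one1 T s (\<lambda>_. 0) = 0" by simp
  then show False using zero_pts[of T s] by (simp add: one1_apply)
qed

lemma supp_RM: "D \<subseteq> RM T s \<Longrightarrow> supp D \<subseteq> rm_points T s"
  by (auto simp: supp_def RM_def rm_word_def split: if_splits)

lemma supp_one1: "D \<subseteq> RM T s \<Longrightarrow> one1 T s \<in> D \<Longrightarrow> supp D = rm_points T s"
  using supp_RM[of D T s] by (force simp: supp_def one1_apply)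

lemma finite_RM: "s \<ge> 1 \<Longrightarrow> finite (RM (T::'a::{finite,field} itself) s)"
  using card_RM[of s T] card_gt_0_iff by fastforce

lemma zero_count:
  assumes j: "j < s - 1" and aj: "a (Suc j) \<noteq> 0"
  shows "card {x \<in> rm_points (T::'a::{finite,field} itself) s. rm_word T s a x = 0} = CARD('a) ^ (s - 2)"
proof -
  let ?P = "rm_points T s"
  define val where "val x = a 0 + (\<Sum>i<s - 1. a (Suc i) * x i)" for x :: "nat \<Rightarrow> 'a"
  define Z where "Z c = {x \<in> ?P. val x = c}" for c
  define tr where "tr t x = x(j := x j + t)" for t :: 'a and x :: "nat \<Rightarrow> 'a"
  have val_tr: "val (tr t x) = val x + a (Suc j) * t" for t x
  proof -
    have "(\<Sum>i<s - 1. a (Suc i) * tr t x i) = (\<Sum>i<s - 1. a (Suc i) * x i + (if i = j then a (Suc j) * t else 0))"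
      by (rule sum.cong) (auto simp: tr_def algebra_simps)
    also have "\<dots> = (\<Sum>i<s - 1. a (Suc i) * x i) + a (Suc j) * t"
      using j by (simp add: sum.distrib)
    finally show ?thesis by (simp add: val_def)
  qed
  have tr_P: "tr t x \<in> ?P \<longleftrightarrow> x \<in> ?P" for t x
    using j by (auto simp: tr_def rm_points_def)
  have tr_tr: "tr (-t) (tr t x) = x" for t x by (auto simp: tr_def fun_eq_iff)
  have tr_tr': "tr t (tr (-t) x) = x" for t x by (auto simp: tr_def fun_eq_iff)
  have cZ: "card (Z c) = card (Z 0)" for c
  proof -
    define t where "t = c / a (Suc j)"
    have "bij_betw (tr t) (Z 0) (Z c)"
    proof (rule bij_betw_byWitness[where f' = "tr (-t)"])
      show "\<forall>x\<in>Z 0. tr (- t) (tr t x) = x" using tr_tr by blast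
      show "\<forall>x\<in>Z c. tr t (tr (- t) x) = x" using tr_tr' by blast
      show "tr t ` Z 0 \<subseteq> Z c" using aj by (auto simp: Z_def tr_P val_tr t_def)
      show "tr (- t) ` Z c \<subseteq> Z 0" using aj by (auto simp: Z_def tr_P val_tr t_def)
    qed
    then show ?thesis by (simp add: bij_betw_same_card)
  qed
  have "?P = (\<Union>c. Z c)" by (auto simp: Z_def)
  then have "card ?P = (\<Sum>c\<in>UNIV. card (Z c))"
    using finite_pts[of T s]
    by (simp only:) (rule card_UN_disjoint, auto simp: Z_def)
  also have "\<dots> = (\<Sum>c\<in>(UNIV::'a set). card (Z 0))" using cZ by (intro sum.cong) auto
  also have "\<dots> = CARD('a) * card (Z 0)" by simp
  finally have e: "CARD('a) * card (Z 0) = CARD('a) * CARD('a) ^ (s - 2)"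
    using j by (simp add: card_pts power_Suc[symmetric] Suc_diff_Suc numeral_2_eq_2)
  have "{x \<in> ?P. rm_word T s a x = 0} = Z 0" by (auto simp: Z_def rm_word_def val_def)
  then show ?thesis using e by simp
qed



lemma arith_core:
  fixes q z Q t :: nat
  assumes q: "q \<ge> 2" and Q: "Q > 0" and z: "z \<le> q * t" and t: "t = Q * q ^ d"
    and eq: "z * (q * Q) + (q * t - z) * Q = q * t + (q * Q - 1) * t"
  shows "z = q ^ d"
proof -
  have qQ: "q * Q \<ge> 1" using q Q by (simp add: Suc_le_eq)
  have "int (z * (q * Q) + (q * t - z) * Q) = int (q * t + (q * Q - 1) * t)" using eq by simp
  moreover have "int ((q * t - z) * Q) = (int q * t - int z) * Q" using z by (simp add: of_nat_diff)
  moreover have "int ((q * Q - 1) * t) = (int q * Q - 1) * t" using qQ by (metis of_nat_1 of_nat_diff of_nat_mult)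
  ultimately have e: "int z * (int q * int Q) + (int q * int t - int z) * int Q = int q * int t + (int q * int Q - 1) * int t"
    by (simp only: of_nat_add of_nat_mult)
  have "(int z * int Q - int t) * (int q - 1) = 0" using e by (simp add: algebra_simps)
  then have "int z * int Q = int t" using q by simp
  then have "int z * int Q = int (q ^ d) * int Q" using t by simp
  then show ?thesis using Q by simp
qed

lemma card_filter_sum: "finite A \<Longrightarrow> card {y \<in> A. P y} = (\<Sum>y\<in>A. if P y then 1 else 0)"
  by (simp add: sum.inter_filter[symmetric])

lemma weight_avoid:
  fixes T :: "'a::{finite,field} itself"
  assumes s: "s \<ge> 1" and D: "ws.subspace D" "D \<subseteq> RM T s" "card D = CARD('a) ^ r"
    and r: "1 \<le> r" "r \<le> s - 1" and one: "one1 T s \<notin> D"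
  shows "wt D = CARD('a) ^ (s - 1) - CARD('a) ^ (s - 1 - r)"
proof -
  let ?q = "CARD('a)"
  let ?P = "rm_points T s"
  have fin: "finite (UNIV::'a set)" by simp
  have q2: "?q \<ge> 2" by (rule ws.card_ge2[OF fin])
  have finD: "finite D" using D(2) finite_RM[OF s] finite_subset by blast
  have finP: "finite ?P" by (rule finite_pts)
  define Z where "Z = {x \<in> ?P. \<forall>f\<in>D. f x = 0}"
  have ZP: "Z \<subseteq> ?P" by (auto simp: Z_def)
  have K1: "card {f \<in> D. f x = 0} = ?q ^ (r - 1)" if x: "x \<in> ?P - Z" for x
  proof -
    define K where "K = {f \<in> D. f x = 0}"
    obtain f0 where f0: "f0 \<in> D" "f0 x \<noteq> 0" using x by (auto simp: Z_def)
    have Ksub: "ws.subspace K"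
      using D(1) unfolding K_def ws.subspace_def by auto
    have spK: "ws.span K = K" using Ksub by simp
    have "ws.span (insert f0 K) = D"
    proof
      show "ws.span (insert f0 K) \<subseteq> D"
        using f0 D(1) by (intro ws.span_minimal) (auto simp: K_def)
      show "D \<subseteq> ws.span (insert f0 K)"
      proof
        fix f assume f: "f \<in> D"
        have "f - word_scale (f x / f0 x) f0 \<in> K"
          using f f0 D(1) by (auto simp: K_def intro!: ws.subspace_diff ws.subspace_scale)
        then show "f \<in> ws.span (insert f0 K)" unfolding ws.span_breakdown_eq spK by blast
      qed
    qed
    moreover have "f0 \<notin> ws.span K" unfolding spK using f0 by (auto simp: K_def)
    ultimately have "card D = ?q * card K" using ws.card_span_insert[OF fin, of f0 K] spK by simp
    then have "?q * card K = ?q * ?q ^ (r - 1)" using D(3) r by (simp flip: power_Suc)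
    then show ?thesis using q2 by (simp add: K_def)
  qed
  have K2: "{f \<in> D. f x = 0} = D" if "x \<in> Z" for x using that by (auto simp: Z_def)
  have Zf: "card {x \<in> ?P. f x = 0} = ?q ^ (s - 2)" if f: "f \<in> D" "f \<noteq> 0" for f
  proof -
    obtain a where fa: "f = rm_word T s a" using f D(2) by (auto simp: RM_def)
    have "\<exists>j<s - 1. a (Suc j) \<noteq> 0"
    proof (rule ccontr)
      assume "\<not> ?thesis"
      then have "f = word_scale (a 0) (one1 T s)"
        by (auto simp: fa rm_word_def one1_apply fun_eq_iff)
      moreover have "a 0 \<noteq> 0" using f(2) calculation by (auto simp: word_scale_def fun_eq_iff)
      ultimately have "one1 T s = word_scale (inverse (a 0)) f"
        by (simp add: word_scale_def fun_eq_iff)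
      then have "one1 T s \<in> D" using f D(1) by (simp add: ws.subspace_scale)
      then show False using one by simp
    qed
    then obtain j where "j < s - 1" "a (Suc j) \<noteq> 0" by blast
    then show ?thesis using zero_count[of j s a T] fa by simp
  qed
  have "(\<Sum>x\<in>?P. card {f \<in> D. f x = 0}) = (\<Sum>f\<in>D. card {x \<in> ?P. f x = 0})"
    using finD finP by (simp add: card_filter_sum sum.swap[of _ ?P D])
  moreover have "(\<Sum>x\<in>?P. card {f \<in> D. f x = 0}) = card Z * ?q ^ r + (?q ^ (s - 1) - card Z) * ?q ^ (r - 1)"
  proof -
    have "(\<Sum>x\<in>?P. card {f \<in> D. f x = 0}) = (\<Sum>x\<in>?P - Z. card {f \<in> D. f x = 0}) + (\<Sum>x\<in>Z. card {f \<in> D. f x = 0})"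
      using sum.subset_diff[OF ZP finP] by simp
    also have "\<dots> = (\<Sum>x\<in>?P - Z. ?q ^ (r - 1)) + (\<Sum>x\<in>Z. ?q ^ r)"
      using K1 K2 D(3) by simp
    also have "\<dots> = (?q ^ (s - 1) - card Z) * ?q ^ (r - 1) + card Z * ?q ^ r"
      using ZP finP finite_subset[OF ZP finP] by (simp add: card_Diff_subset card_pts)
    finally show ?thesis by simp
  qed
  moreover have "(\<Sum>f\<in>D. card {x \<in> ?P. f x = 0}) = ?q ^ (s - 1) + (?q ^ r - 1) * ?q ^ (s - 2)"
  proof -
    have "0 \<in> D" using D(1) by (simp add: ws.subspace_0)
    then have "(\<Sum>f\<in>D. card {x \<in> ?P. f x = 0}) = card {x \<in> ?P. (0::(nat \<Rightarrow> 'a) \<Rightarrow> 'a) x = 0} + (\<Sum>f\<in>D - {0}. card {x \<in> ?P. f x = 0})"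
      using finD by (simp add: sum.remove)
    also have "\<dots> = ?q ^ (s - 1) + (\<Sum>f\<in>D - {0}. ?q ^ (s - 2))"
      using Zf by (simp add: card_pts)
    also have "\<dots> = ?q ^ (s - 1) + (?q ^ r - 1) * ?q ^ (s - 2)"
      using finD \<open>0 \<in> D\<close> D(3) by (simp add: card_Diff_singleton)
    finally show ?thesis .
  qed
  ultimately have eq: "card Z * ?q ^ r + (?q ^ (s - 1) - card Z) * ?q ^ (r - 1) = ?q ^ (s - 1) + (?q ^ r - 1) * ?q ^ (s - 2)"
    by simp
  have s2: "Suc (s - 2) = s - 1" using r by arith
  have r1: "Suc (r - 1) = r" using r by arith
  have cZ: "card Z = ?q ^ (s - 1 - r)"
  proof (rule arith_core[OF q2, of "?q ^ (r - 1)" _ "?q ^ (s - 2)"])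
    show "?q ^ (r - 1) > 0" by simp
    have "card Z \<le> card ?P" using ZP finP by (rule card_mono[rotated])
    then show "card Z \<le> ?q * ?q ^ (s - 2)" using s2 by (simp add: card_pts flip: power_Suc)
    show "?q ^ (s - 2) = ?q ^ (r - 1) * ?q ^ (s - 1 - r)" using r by (simp flip: power_add)
    show "card Z * (?q * ?q ^ (r - 1)) + (?q * ?q ^ (s - 2) - card Z) * ?q ^ (r - 1) =
      ?q * ?q ^ (s - 2) + (?q * ?q ^ (r - 1) - 1) * ?q ^ (s - 2)"
      using eq s2 r1 by (simp flip: power_Suc)
  qed
  have "supp D = ?P - Z" using supp_RM[OF D(2)] by (auto simp: supp_def Z_def)
  then have "wt D = card ?P - card Z" using ZP finP finite_subset[OF ZP finP] by (simp add: wt_def card_Diff_subset)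
  then show ?thesis using cZ by (simp add: card_pts)
qed



lemma sum_two_delta:
  fixes X Y :: "'b::comm_ring_1"
  assumes "a \<le> n" "b \<le> n"
  shows "(\<Sum>w = 0..n. of_nat ((if w = a then c1 else 0) + (if w = b then c2 else 0)) * X ^ (n - w) * Y ^ w)
    = of_nat c1 * X ^ (n - a) * Y ^ a + of_nat c2 * X ^ (n - b) * Y ^ b"
proof -
  have "(\<Sum>w = 0..n. of_nat ((if w = a then c1 else 0) + (if w = b then c2 else 0)) * X ^ (n - w) * Y ^ w)
     = (\<Sum>w = 0..n. (if w = a then of_nat c1 * X ^ (n - a) * Y ^ a else 0) + (if w = b then of_nat c2 * X ^ (n - b) * Y ^ b else 0))"
    by (rule sum.cong) (auto simp: algebra_simps)
  also have "\<dots> = of_nat c1 * X ^ (n - a) * Y ^ a + of_nat c2 * X ^ (n - b) * Y ^ b"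
    using assms by (simp add: sum.distrib)
  finally show ?thesis .
qed

definition PP :: "nat \<Rightarrow> nat \<Rightarrow> nat \<Rightarrow> nat" where
  "PP q a b = (\<Prod>i<b. q ^ a - q ^ i)"

lemma PP_pos: "q \<ge> 2 \<Longrightarrow> PP q m m > 0"
  unfolding PP_def by (auto intro!: prod_pos simp: power_strict_increasing_iff)

lemma gauss_PP: "b \<le> a \<Longrightarrow> gauss_binom q a b = PP q a b div PP q b b"
  by (simp add: gauss_binom_def PP_def)

lemma prod_factor_q: fixes q x :: nat shows "(\<Prod>i<m. q * x - q * f i) = q ^ m * (\<Prod>i<m. x - f i)"
proof -
  have "(\<Prod>i<m. q * x - q * f i) = (\<Prod>i<m. q * (x - f i))" by (simp add: diff_mult_distrib2)
  also have "\<dots> = q ^ m * (\<Prod>i<m. x - f i)" by (simp add: prod.distrib)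
  finally show ?thesis .
qed

lemma dim_iff_card:
  fixes T :: "'a::{finite,field} itself"
  assumes s: "s \<ge> 1" and D: "ws.subspace D" "D \<subseteq> RM T s"
  shows "ws.dim D = r \<longleftrightarrow> card D = CARD('a) ^ r"
proof -
  have finD: "finite D" using D(2) finite_RM[OF s] finite_subset by blast
  have "card D = CARD('a) ^ ws.dim D" by (rule ws.card_subspace_dim[OF _ D(1) finD]) simp
  moreover have "CARD('a) \<ge> 2" by (rule ws.card_ge2) simp
  ultimately show ?thesis by (simp add: power_inject_exp)
qed

definition Cont :: "'a::{finite,field} itself \<Rightarrow> nat \<Rightarrow> nat \<Rightarrow> ((nat \<Rightarrow> 'a) \<Rightarrow> 'a) set set" where
  "Cont T s r = {D. ws.subspace D \<and> D \<subseteq> RM T s \<and> card D = CARD('a) ^ r \<and> one1 T s \<in> D}"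

definition Avo :: "'a::{finite,field} itself \<Rightarrow> nat \<Rightarrow> nat \<Rightarrow> ((nat \<Rightarrow> 'a) \<Rightarrow> 'a) set set" where
  "Avo T s r = {D. ws.subspace D \<and> D \<subseteq> RM T s \<and> card D = CARD('a) ^ r \<and> one1 T s \<notin> D}"

lemma card_Cont_PP:
  fixes T :: "'a::{finite,field} itself"
  assumes s: "s \<ge> 1" and m: "m + 1 \<le> s"
  shows "card (Cont T s (Suc m)) * PP CARD('a) m m = PP CARD('a) (s - 1) m"
proof -
  let ?q = "CARD('a)"
  have fin: "finite (UNIV::'a set)" by simp
  define B where "B = ws.span {one1 T s}"
  have cB: "card B = ?q"
    using ws.card_span_insert[OF fin, of "one1 T s" "{}"] one1_nz[of T s] by (simp add: B_def)
  have V: "ws.subspace (RM T s)" "finite (RM T s)" using RM_subspace finite_RM[OF s] by auto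
  have Bs: "ws.subspace B" "B \<subseteq> RM T s"
    using one1_RM[of T s] V ws.span_minimal[of "{one1 T s}" "RM T s"] by (auto simp: B_def)
  have BD: "B \<subseteq> D \<longleftrightarrow> one1 T s \<in> D" if "ws.subspace D" for D
    using that ws.span_minimal[of "{one1 T s}" D] ws.span_superset[of "{one1 T s}"]
    by (auto simp: B_def)
  have eqset: "{D. ws.subspace D \<and> B \<subseteq> D \<and> D \<subseteq> RM T s \<and> card D = card B * ?q ^ m} = Cont T s (Suc m)"
    using BD cB by (auto simp: Cont_def)
  have "card (Cont T s (Suc m)) * (\<Prod>i<m. ?q * ?q ^ m - ?q * ?q ^ i) = (\<Prod>i<m. ?q ^ s - ?q * ?q ^ i)"
    using ws.count_sub_containing[OF fin V Bs, of m] eqset cB card_RM[OF s, where T=T] by simp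
  moreover have "?q ^ s = ?q * ?q ^ (s - 1)" using s by (simp flip: power_Suc)
  ultimately have "card (Cont T s (Suc m)) * (?q ^ m * PP ?q m m) = ?q ^ m * PP ?q (s - 1) m"
    by (simp add: prod_factor_q PP_def)
  then show ?thesis by simp
qed

lemma card_Cont:
  fixes T :: "'a::{finite,field} itself"
  assumes s: "s \<ge> 1" and m: "m + 1 \<le> s"
  shows "card (Cont T s (Suc m)) = gauss_binom CARD('a) (s - 1) m"
proof -
  have "PP CARD('a) m m > 0" by (rule PP_pos) (rule ws.card_ge2, simp)
  moreover have "card (Cont T s (Suc m)) * PP CARD('a) m m = PP CARD('a) (s - 1) m"
    by (rule card_Cont_PP[OF s m])
  ultimately have "card (Cont T s (Suc m)) = PP CARD('a) (s - 1) m div PP CARD('a) m m"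
    by (metis nonzero_mult_div_cancel_right less_not_refl)
  then show ?thesis using m by (simp add: gauss_PP)
qed

lemma card_Avo:
  fixes T :: "'a::{finite,field} itself"
  assumes s: "s \<ge> 1" and r: "r + 1 \<le> s"
  shows "card (Avo T s r) = CARD('a) ^ r * gauss_binom CARD('a) (s - 1) r"
proof -
  let ?q = "CARD('a)"
  have fin: "finite (UNIV::'a set)" by simp
  have V: "ws.subspace (RM T s)" "finite (RM T s)" using RM_subspace finite_RM[OF s] by auto
  have "card (Avo T s r) * (\<Prod>i<r. ?q ^ r - ?q ^ i) = (\<Prod>i<r. ?q ^ s - ?q * ?q ^ i)"
    using ws.count_sub_avoiding[OF fin V one1_RM one1_nz, of r] card_RM[OF s, where T=T]
    by (simp add: Avo_def)
  moreover have "?q ^ s = ?q * ?q ^ (s - 1)" using s by (simp flip: power_Suc)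
  ultimately have "card (Avo T s r) * PP ?q r r = ?q ^ r * PP ?q (s - 1) r"
    by (simp add: prod_factor_q PP_def)
  also have "\<dots> = ?q ^ r * card (Cont T s (Suc r)) * PP ?q r r"
    using card_Cont_PP[OF s r, where T=T] by simp
  moreover have "?q \<ge> 2" by (rule ws.card_ge2) simp
  ultimately have "card (Avo T s r) = ?q ^ r * card (Cont T s (Suc r))"
    using PP_pos[of ?q r] by simp
  then show ?thesis using card_Cont[OF s r, where T=T] by simp
qed



lemma gen_A_set:
  fixes T :: "'a::{finite,field} itself"
  assumes s: "s \<ge> 1"
  shows "gen_A T s r w = card {D. ws.subspace D \<and> D \<subseteq> RM T s \<and> card D = CARD('a) ^ r \<and> wt D = w}"
proof -
  have "{D. ws.subspace D \<and> D \<subseteq> RM T s \<and> ws.dim D = r \<and> wt D = w}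
      = {D. ws.subspace D \<and> D \<subseteq> RM T s \<and> card D = CARD('a) ^ r \<and> wt D = w}"
    using dim_iff_card[OF s] by blast
  then show ?thesis by (simp add: gen_A_def)
qed

lemma wt_one1: "D \<subseteq> RM T s \<Longrightarrow> one1 T s \<in> D \<Longrightarrow> wt D = CARD('a) ^ (s - 1)"
  for T :: "'a::{finite,field} itself"
  by (simp add: wt_def supp_one1 card_pts)

lemma gen_A_mid:
  fixes T :: "'a::{finite,field} itself"
  assumes s: "s \<ge> 1" and r: "0 < r" "r < s"
  shows "gen_A T s r w = (if w = CARD('a) ^ (s - 1) then card (Cont T s r) else 0)
     + (if w = CARD('a) ^ (s - 1) - CARD('a) ^ (s - 1 - r) then card (Avo T s r) else 0)"
proof -
  define n where "n = CARD('a) ^ (s - 1)"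
  define e where "e = CARD('a) ^ (s - 1 - r)"
  have e: "e > 0" "e \<le> n" by (simp_all add: power_increasing e_def n_def)
  then have ne: "n \<noteq> n - e" by arith
  define S where "S = {D. ws.subspace D \<and> D \<subseteq> RM T s \<and> card D = CARD('a) ^ r \<and> wt D = w}"
  have wtD: "wt D = (if one1 T s \<in> D then n else n - e)"
    if "ws.subspace D" "D \<subseteq> RM T s" "card D = CARD('a) ^ r" for D
  proof (cases "one1 T s \<in> D")
    case True then show ?thesis using wt_one1[OF that(2) True] by (simp add: n_def)
  next
    case False
    have "1 \<le> r" "r \<le> s - 1" using r by auto
    then show ?thesis using weight_avoid[OF s that \<open>1 \<le> r\<close> \<open>r \<le> s - 1\<close> False] False
      by (simp add: n_def e_def)
  qed
  have A: "gen_A T s r w = card S" unfolding S_def by (rule gen_A_set[OF s])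
  have "card S = (if w = n then card (Cont T s r) else 0) + (if w = n - e then card (Avo T s r) else 0)"
  proof (cases "w = n")
    case True
    have "S = Cont T s r"
    proof (intro set_eqI iffI)
      fix D assume D: "D \<in> S"
      then have "one1 T s \<in> D" using wtD[of D] ne True unfolding S_def by (metis (mono_tags, lifting) mem_Collect_eq)
      then show "D \<in> Cont T s r" using D unfolding Cont_def S_def by blast
    next
      fix D assume D: "D \<in> Cont T s r"
      then have "wt D = n" using wtD[of D] unfolding Cont_def by simp
      then show "D \<in> S" using D True unfolding Cont_def S_def by blast
    qed
    then show ?thesis using True ne by simp
  next
    case False
    show ?thesis
    proof (cases "w = n - e")
      case True
      have "S = Avo T s r"
      proof (intro set_eqI iffI)
        fix D assume D: "D \<in> S"
        then have "one1 T s \<notin> D" using wtD[of D] ne True unfolding S_def by (metis (mono_tags, lifting) mem_Collect_eq)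
        then show "D \<in> Avo T s r" using D unfolding Avo_def S_def by blast
      next
        fix D assume D: "D \<in> Avo T s r"
        then have "wt D = n - e" using wtD[of D] unfolding Avo_def by simp
        then show "D \<in> S" using D True unfolding Avo_def S_def by blast
      qed
      then show ?thesis using True ne by simp
    next
      case False2: False
      have "S = {}"
      proof (intro set_eqI iffI)
        fix D assume D: "D \<in> S"
        then have "wt D = w" "wt D = n \<or> wt D = n - e" using wtD[of D] unfolding S_def by auto
        then show "D \<in> {}" using False False2 by auto
      qed simp
      then show ?thesis using False False2 by simp
    qed
  qed
  then show ?thesis using A by (simp add: n_def e_def)
qed

lemma gen_A_0:
  fixes T :: "'a::{finite,field} itself"
  assumes s: "s \<ge> 1"
  shows "gen_A T s 0 w = (if w = 0 then 1 else 0)"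
proof -
  define S where "S = {D. ws.subspace D \<and> D \<subseteq> RM T s \<and> card D = CARD('a) ^ 0 \<and> wt D = w}"
  have D0: "D = {0}" if "ws.subspace D" "card D = 1" for D :: "((nat \<Rightarrow> 'a) \<Rightarrow> 'a) set"
  proof -
    have "0 \<in> D" using that by (simp add: ws.subspace_0)
    then show ?thesis using that by (metis card_1_singletonE singletonD)
  qed
  have w0: "wt {0 :: (nat \<Rightarrow> 'a) \<Rightarrow> 'a} = 0" by (simp add: wt_def supp_def)
  have sub0: "ws.subspace {0 :: (nat \<Rightarrow> 'a) \<Rightarrow> 'a}" by simp
  have R0: "{0} \<subseteq> RM T s" using RM_subspace[of T s] by (simp add: ws.subspace_0)
  have "S = (if w = 0 then {{0::(nat \<Rightarrow> 'a) \<Rightarrow> 'a}} else {})"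
  proof (intro set_eqI iffI)
    fix D assume D: "D \<in> S"
    then have "D = {0}" using D0 unfolding S_def by simp
    then show "D \<in> (if w = 0 then {{0::(nat \<Rightarrow> 'a) \<Rightarrow> 'a}} else {})" using D w0 unfolding S_def by simp
  next
    fix D assume D: "D \<in> (if w = 0 then {{0::(nat \<Rightarrow> 'a) \<Rightarrow> 'a}} else {})"
    then have "w = 0" "D = {0}" by (auto split: if_splits)
    then show "D \<in> S" using w0 sub0 R0 unfolding S_def by simp
  qed
  then show ?thesis using gen_A_set[OF s, of T 0 w] unfolding S_def by simp
qed

lemma gen_A_s:
  fixes T :: "'a::{finite,field} itself"
  assumes s: "s \<ge> 1"
  shows "gen_A T s s w = (if w = CARD('a) ^ (s - 1) then 1 else 0)"
proof -
  define S where "S = {D. ws.subspace D \<and> D \<subseteq> RM T s \<and> card D = CARD('a) ^ s \<and> wt D = w}"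
  have DR: "D = RM T s" if "D \<subseteq> RM T s" "card D = CARD('a) ^ s" for D
    using card_subset_eq[OF finite_RM[OF s] that(1)] that card_RM[OF s, where T=T] by simp
  have wR: "wt (RM T s) = CARD('a) ^ (s - 1)" by (rule wt_one1) (auto simp: one1_RM)
  have "S = (if w = CARD('a) ^ (s - 1) then {RM T s} else {})"
  proof (intro set_eqI iffI)
    fix D assume D: "D \<in> S"
    then have "D = RM T s" using DR unfolding S_def by simp
    then show "D \<in> (if w = CARD('a) ^ (s - 1) then {RM T s} else {})" using D wR unfolding S_def by simp
  next
    fix D assume D: "D \<in> (if w = CARD('a) ^ (s - 1) then {RM T s} else {})"
    then have "w = CARD('a) ^ (s - 1)" "D = RM T s" by (auto split: if_splits)
    then show "D \<in> S" using wR RM_subspace[of T s] card_RM[OF s, where T=T] unfolding S_def by simp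
  qed
  then show ?thesis using gen_A_set[OF s, of T s w] unfolding S_def by simp
qed

theorem mainTheorem4:
  fixes T :: "'a::{finite,field} itself" and s :: nat and X Y :: "'b::comm_ring_1"
  assumes "s \<ge> 1"
  shows "(\<forall>r. 0 < r \<and> r < s \<longrightarrow>
            gen_W T s r X Y =
              of_nat (gauss_binom (CARD('a)) (s - 1) (r - 1)) * Y ^ (CARD('a) ^ (s - 1))
            + of_nat (CARD('a) ^ r * gauss_binom (CARD('a)) (s - 1) r)
                * X ^ (CARD('a) ^ (s - 1 - r)) * Y ^ (CARD('a) ^ (s - 1) - CARD('a) ^ (s - 1 - r)))
       \<and> gen_W T s 0 X Y = X ^ (CARD('a) ^ (s - 1))
       \<and> gen_W T s s X Y = Y ^ (CARD('a) ^ (s - 1))"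
proof (intro conjI allI impI)
  let ?q = "CARD('a)"
  let ?n = "?q ^ (s - 1)"
  have n: "card (rm_points T s) = ?n" by (rule card_pts)
  fix r assume r: "0 < r \<and> r < s"
  let ?e = "?q ^ (s - 1 - r)"
  have e: "?e \<le> ?n" by (simp add: power_increasing)
  have "gen_W T s r X Y = (\<Sum>w = 0..?n. of_nat ((if w = ?n then card (Cont T s r) else 0)
     + (if w = ?n - ?e then card (Avo T s r) else 0)) * X ^ (?n - w) * Y ^ w)"
    unfolding gen_W_def Let_def n
    by (rule sum.cong[OF refl]) (simp only: gen_A_mid[OF assms conjunct1[OF r] conjunct2[OF r]])
  also have "\<dots> = of_nat (card (Cont T s r)) * X ^ (?n - ?n) * Y ^ ?n
      + of_nat (card (Avo T s r)) * X ^ (?n - (?n - ?e)) * Y ^ (?n - ?e)"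
    by (rule sum_two_delta) simp_all
  also have "card (Cont T s r) = gauss_binom ?q (s - 1) (r - 1)"
    using card_Cont[OF assms, of "r - 1" T] r by simp
  also have "card (Avo T s r) = ?q ^ r * gauss_binom ?q (s - 1) r"
    using card_Avo[OF assms, of r T] r by simp
  finally show "gen_W T s r X Y =
              of_nat (gauss_binom (CARD('a)) (s - 1) (r - 1)) * Y ^ (CARD('a) ^ (s - 1))
            + of_nat (CARD('a) ^ r * gauss_binom (CARD('a)) (s - 1) r)
                * X ^ (CARD('a) ^ (s - 1 - r)) * Y ^ (CARD('a) ^ (s - 1) - CARD('a) ^ (s - 1 - r))"
    using e by simp
next
  let ?n = "CARD('a) ^ (s - 1)"
  have n: "card (rm_points T s) = ?n" by (rule card_pts)
  have "gen_W T s 0 X Y = (\<Sum>w = 0..?n. of_nat ((if w = 0 then 1 else 0) + (if w = 0 then 0 else 0::nat)) * X ^ (?n - w) * Y ^ w)"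
    unfolding gen_W_def Let_def n by (rule sum.cong[OF refl]) (simp add: gen_A_0[OF assms])
  also have "\<dots> = X ^ ?n" by (subst sum_two_delta) simp_all
  finally show "gen_W T s 0 X Y = X ^ ?n" .
next
  let ?n = "CARD('a) ^ (s - 1)"
  have n: "card (rm_points T s) = ?n" by (rule card_pts)
  have "gen_W T s s X Y = (\<Sum>w = 0..?n. of_nat ((if w = ?n then 1 else 0) + (if w = 0 then 0 else 0::nat)) * X ^ (?n - w) * Y ^ w)"
    unfolding gen_W_def Let_def n by (rule sum.cong[OF refl]) (simp add: gen_A_s[OF assms])
  also have "\<dots> = Y ^ ?n" by (subst sum_two_delta) simp_all
  finally show "gen_W T s s X Y = Y ^ ?n" .
qed


end
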